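(* Let $f\in K[X]$ be a regular polynomial with exactly $t+1$ nonzero monomial terms. Then the number of roots of $f$ in $K^\ast=K\setminus\{0\}$ is at most $t(q-1)$, and all roots of $f$ in $K^\ast$ are simple.
   Context: $K$ is a field complete with respect to a non-archimedean discrete valuation $v$, normalized by $v(\pi)=1$ for a uniformizer $\pi$ of the valuation ring $A=\{x\in K: v(x)\geq 0\}$; the residue field $\kappa=A/\pi A$ is finite with $q$ elements and characteristic $p$. For $h=\sum_{i=0}^d c_iX^i\in K[X]$, the Newton polygon of $h$ is the convex hull of the points $(i,v(c_i))$ with $c_i\neq 0$. An edge of a polygon in $\mathbb{R}^2$ is a lower edge if it has an inner normal vector with positive second coordinate. $h$ is regular if for every lower edge $S$ of its Newton polygon, with vertices $(s,v(c_s))$ and $(s',v(c_{s'}))$, $s>s'$: (1) $S$ contains exactly two points of the set $\{(i,v(c_i)) : 0\leq i\leq d,\ c_i\neq 0\}$; (2) $p\nmid (s-s')$. *)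

theory Defs
  imports "HOL-Computational_Algebra.Polynomial" "HOL-Computational_Algebra.Primes"
begin

text \<open>A valuation v : K* -> Z on a field K (the value at 0 is irrelevant and never used).\<close>

definition discrete_valuation :: "('a::field \<Rightarrow> int) \<Rightarrow> bool" where
  "discrete_valuation v \<longleftrightarrow>
     (\<forall>x y. x \<noteq> 0 \<longrightarrow> y \<noteq> 0 \<longrightarrow> v (x * y) = v x + v y) \<and>
     (\<forall>x y. x \<noteq> 0 \<longrightarrow> y \<noteq> 0 \<longrightarrow> x + y \<noteq> 0 \<longrightarrow> min (v x) (v y) \<le> v (x + y)) \<and>
     (\<exists>\<pi>. \<pi> \<noteq> 0 \<and> v \<pi> = 1)"

text \<open>Elements of valuation at least N (together with 0), i.e. the ideal pi^N A.\<close>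
definition vball :: "('a::field \<Rightarrow> int) \<Rightarrow> int \<Rightarrow> 'a set" where
  "vball v N = {x. x = 0 \<or> N \<le> v x}"

definition v_complete :: "('a::field \<Rightarrow> int) \<Rightarrow> bool" where
  "v_complete v \<longleftrightarrow>
     (\<forall>X :: nat \<Rightarrow> 'a.
        (\<forall>N. \<exists>M. \<forall>m\<ge>M. \<forall>n\<ge>M. X m - X n \<in> vball v N) \<longrightarrow>
        (\<exists>L. \<forall>N. \<exists>M. \<forall>n\<ge>M. X n - L \<in> vball v N))"

definition valring :: "('a::field \<Rightarrow> int) \<Rightarrow> 'a set" where
  "valring v = vball v 0"

definition maxideal :: "('a::field \<Rightarrow> int) \<Rightarrow> 'a set" where
  "maxideal v = vball v 1"

definition residue_rel :: "('a::field \<Rightarrow> int) \<Rightarrow> ('a \<times> 'a) set" where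
  "residue_rel v = {(x, y). x \<in> valring v \<and> y \<in> valring v \<and> x - y \<in> maxideal v}"

definition residue_field :: "('a::field \<Rightarrow> int) \<Rightarrow> 'a set set" where
  "residue_field v = valring v // residue_rel v"

definition newton_pts :: "('a::field \<Rightarrow> int) \<Rightarrow> 'a poly \<Rightarrow> (int \<times> int) set" where
  "newton_pts v f = {(int i, v (coeff f i)) | i. coeff f i \<noteq> 0}"

text \<open>c lies on or above the (non-vertical) line through a and b, where fst a < fst b.\<close>
definition on_or_above :: "int \<times> int \<Rightarrow> int \<times> int \<Rightarrow> int \<times> int \<Rightarrow> bool" where
  "on_or_above a b c \<longleftrightarrow> (snd b - snd a) * (fst c - fst a) \<le> (snd c - snd a) * (fst b - fst a)"

definition on_line :: "int \<times> int \<Rightarrow> int \<times> int \<Rightarrow> int \<times> int \<Rightarrow> bool" where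
  "on_line a b c \<longleftrightarrow> (snd b - snd a) * (fst c - fst a) = (snd c - snd a) * (fst b - fst a)"

text \<open>The segment from a to b (fst a < fst b) is a lower edge of the Newton polygon:
  a, b are points of the set, all points lie on or above the line through a and b
  (so the inner normal has positive second coordinate), and a, b are the extreme
  points of the set on that line (so the segment is the full edge).\<close>
definition lower_edge :: "('a::field \<Rightarrow> int) \<Rightarrow> 'a poly \<Rightarrow> int \<times> int \<Rightarrow> int \<times> int \<Rightarrow> bool" where
  "lower_edge v f a b \<longleftrightarrow>
     a \<in> newton_pts v f \<and> b \<in> newton_pts v f \<and> fst a < fst b \<and>
     (\<forall>c\<in>newton_pts v f. on_or_above a b c) \<and>
     (\<forall>c\<in>newton_pts v f. on_line a b c \<longrightarrow> fst a \<le> fst c \<and> fst c \<le> fst b)"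

definition regular :: "('a::field \<Rightarrow> int) \<Rightarrow> nat \<Rightarrow> 'a poly \<Rightarrow> bool" where
  "regular v p f \<longleftrightarrow>
     (\<forall>a b. lower_edge v f a b \<longrightarrow>
        card {c \<in> newton_pts v f. on_line a b c} = 2 \<and>
        \<not> (int p dvd (fst b - fst a)))"

end

theory Submission
  imports Defs
begin


lemma vb_iff: "x \<in> vball v N \<longleftrightarrow> x = 0 \<or> N \<le> v x" by (simp add: vball_def)

context fixes v :: "'a::field \<Rightarrow> int" assumes dv: "discrete_valuation v" begin

lemma vmult: "x \<noteq> 0 \<Longrightarrow> y \<noteq> 0 \<Longrightarrow> v (x*y) = v x + v y"
  using dv unfolding discrete_valuation_def by blast
lemma vadd: "x \<noteq> 0 \<Longrightarrow> y \<noteq> 0 \<Longrightarrow> x + y \<noteq> 0 \<Longrightarrow> min (v x) (v y) \<le> v (x+y)"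
  using dv unfolding discrete_valuation_def by blast
lemma v1: "v 1 = 0" using vmult[of 1 1] by simp
lemma vneg1: "v (-1) = 0" using vmult[of "-1" "-1"] v1 by simp
lemma vneg: "v (-x) = v x"
proof (cases "x = 0")
  case False then show ?thesis using vmult[of "-1" x] vneg1 by simp
qed simp
lemma vpow: "x \<noteq> 0 \<Longrightarrow> v (x^k) = int k * v x"
  by (induction k) (auto simp: v1 vmult algebra_simps)
lemma vdiv: "x \<noteq> 0 \<Longrightarrow> y \<noteq> 0 \<Longrightarrow> v (x/y) = v x - v y"
  using vmult[of "x/y" y] by simp

lemma vb_zero[simp]: "0 \<in> vball v N" by (simp add: vb_iff)
lemma vb_self: "x \<noteq> 0 \<Longrightarrow> x \<in> vball v (v x)" by (simp add: vb_iff)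
lemma vb_not: "x \<noteq> 0 \<Longrightarrow> x \<notin> vball v (v x + 1)" by (simp add: vb_iff)
lemma vb_mono: "x \<in> vball v N \<Longrightarrow> M \<le> N \<Longrightarrow> x \<in> vball v M" by (auto simp: vb_iff)
lemma vb_add: "x \<in> vball v N \<Longrightarrow> y \<in> vball v N \<Longrightarrow> x + y \<in> vball v N"
proof -
  assume a: "x \<in> vball v N" "y \<in> vball v N"
  show ?thesis
  proof (cases "x = 0 \<or> y = 0 \<or> x + y = 0")
    case True then show ?thesis using a by auto
  next
    case False then show ?thesis using a vadd[of x y] by (auto simp: vb_iff)
  qed
qed
lemma vb_neg: "x \<in> vball v N \<Longrightarrow> -x \<in> vball v N" by (auto simp: vb_iff vneg)
lemma vb_neg_iff: "-x \<in> vball v N \<longleftrightarrow> x \<in> vball v N" using vb_neg[of "-x"] vb_neg[of x] by auto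
lemma vb_diff: "x \<in> vball v N \<Longrightarrow> y \<in> vball v N \<Longrightarrow> x - y \<in> vball v N"
  using vb_add[of x N "-y"] vb_neg[of y] by simp
lemma vb_sum: "(\<And>i. i \<in> A \<Longrightarrow> g i \<in> vball v N) \<Longrightarrow> sum g A \<in> vball v N"
  by (induction A rule: infinite_finite_induct) (auto intro: vb_add)
lemma vb_mult: "x \<in> vball v N \<Longrightarrow> y \<in> vball v M \<Longrightarrow> x * y \<in> vball v (N + M)"
  by (cases "x = 0 \<or> y = 0") (auto simp: vb_iff vmult)
lemma vb_mult': "x \<in> vball v N \<Longrightarrow> y \<in> vball v M \<Longrightarrow> N + M \<ge> K \<Longrightarrow> x * y \<in> vball v K"
  using vb_mult vb_mono by blast
lemma vb_one: "1 \<in> vball v 0" by (simp add: vb_iff v1)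
lemma vb_of_nat: "of_nat n \<in> vball v 0"
  by (induction n) (auto intro!: vb_add vb_one)
lemma vb_of_int: "of_int n \<in> vball v 0"
  by (cases n) (auto intro!: vb_neg vb_of_nat simp del: of_nat_Suc)
lemma vb_pow: "x \<in> vball v m \<Longrightarrow> x ^ k \<in> vball v (int k * m)"
  by (induction k) (auto simp: vb_one algebra_simps intro: vb_mult'[of x m])

lemma unit_int:
  assumes p: "prime (p::nat)" and pm: "of_nat p \<in> vball v 1" and nd: "\<not> int p dvd n"
  shows "(of_int n :: 'a) \<noteq> 0 \<and> v (of_int n) = 0"
proof -
  have cop: "coprime (int p) n" using p nd
  proof -
    have "prime (int p)" using p by simp
    then show ?thesis using nd prime_imp_coprime by blast
  qed
  obtain a b where ab: "a * int p + b * n = 1" using bezout_int[of "int p" n] cop by auto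
  have "(of_int a * of_nat p + of_int b * of_int n :: 'a) = 1"
    using arg_cong[OF ab, of "of_int :: int \<Rightarrow> 'a"] by simp
  moreover have "(of_int a * of_nat p :: 'a) \<in> vball v 1" using vb_mult[OF vb_of_int pm] by simp
  moreover have "(of_int n :: 'a) \<notin> vball v 1"
  proof
    assume "(of_int n :: 'a) \<in> vball v 1"
    then have "(of_int b * of_int n :: 'a) \<in> vball v 1" using vb_mult[OF vb_of_int] by fastforce
    with calculation have "(1::'a) \<in> vball v 1" using vb_add by metis
    then show False by (simp add: vb_iff v1)
  qed
  moreover have "(of_int n::'a) \<in> vball v 0" by (rule vb_of_int)
  ultimately show ?thesis by (auto simp: vb_iff)
qed

end

definition Iset :: "'a::zero poly \<Rightarrow> nat set" where "Iset f = {i. coeff f i \<noteq> 0}"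
definition phi :: "('a::field \<Rightarrow> int) \<Rightarrow> 'a poly \<Rightarrow> int \<Rightarrow> nat \<Rightarrow> int" where
  "phi v f m i = v (coeff f i) + int i * m"
definition mu :: "('a::field \<Rightarrow> int) \<Rightarrow> 'a poly \<Rightarrow> int \<Rightarrow> int" where
  "mu v f m = Min (phi v f m ` Iset f)"
definition Sm :: "('a::field \<Rightarrow> int) \<Rightarrow> 'a poly \<Rightarrow> int \<Rightarrow> nat set" where
  "Sm v f m = {i \<in> Iset f. phi v f m i = mu v f m}"

lemma Iset_finite: "finite (Iset f)"
proof -
  have "Iset f \<subseteq> {..degree f}" by (auto simp: Iset_def le_degree)
  then show ?thesis using finite_subset by blast
qed

lemma poly_Iset: "poly f x = (\<Sum>i\<in>Iset f. coeff f i * x ^ i)" for x :: "'a::field"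
  unfolding poly_altdef
  by (rule sum.mono_neutral_right[of "{..degree f}" "Iset f" "\<lambda>i. coeff f i * x^i"])
     (auto simp: Iset_def le_degree)

lemma Iset_ne: "f \<noteq> 0 \<Longrightarrow> Iset f \<noteq> {}"
  by (auto simp: Iset_def poly_eq_iff)

lemma mu_le: "i \<in> Iset f \<Longrightarrow> mu v f m \<le> phi v f m i"
  unfolding mu_def by (rule Min_le) (auto simp: Iset_finite)

lemma mu_in: "f \<noteq> 0 \<Longrightarrow> \<exists>i\<in>Iset f. phi v f m i = mu v f m"
  unfolding mu_def using Iset_finite Iset_ne
  by (metis (no_types, lifting) Min_in finite_imageI image_iff image_is_empty)

lemma Sm_finite: "finite (Sm v f m)" using Iset_finite[of f] by (simp add: Sm_def)
lemma Sm_sub: "Sm v f m \<subseteq> Iset f" by (auto simp: Sm_def)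

lemma Sm_mono:
  assumes "i \<in> Sm v f m1" "j \<in> Sm v f m2" "m1 < m2" shows "j \<le> i"
proof -
  have a: "phi v f m1 i \<le> phi v f m1 j" using assms mu_le[of j f v m1] by (auto simp: Sm_def)
  have b: "phi v f m2 j \<le> phi v f m2 i" using assms mu_le[of i f v m2] by (auto simp: Sm_def)
  have "(int j - int i) * (m2 - m1) \<le> 0" using a b by (simp add: phi_def algebra_simps)
  then have "int j - int i \<le> 0" using assms(3) by (simp add: mult_le_0_iff)
  then show ?thesis by simp
qed

context fixes v :: "'a::field \<Rightarrow> int" and f :: "'a poly"
  assumes dv: "discrete_valuation v"
begin

lemma term_v:
  assumes "i \<in> Iset f" "x \<noteq> 0"
  shows "coeff f i * x ^ i \<noteq> 0 \<and> v (coeff f i * x ^ i) = phi v f (v x) i"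
  using assms by (simp add: Iset_def phi_def vmult[OF dv] vpow[OF dv])

lemma term_vb:
  assumes "i \<in> Iset f" "x \<noteq> 0"
  shows "coeff f i * x ^ i \<in> vball v (phi v f (v x) i)"
  using term_v[OF assms] vb_self[OF dv] by metis

lemma two_min:
  assumes f0: "f \<noteq> 0" and x: "x \<noteq> 0" "poly f x = 0" and s: "s \<in> Sm v f (v x)"
  shows "\<exists>j\<in>Sm v f (v x). j \<noteq> s"
proof (rule ccontr)
  assume nt: "\<not> ?thesis"
  then have hi: "phi v f (v x) j \<ge> mu v f (v x) + 1" if j: "j \<in> Iset f - {s}" for j
  proof -
    have "j \<notin> Sm v f (v x)" using nt j by auto
    then have "phi v f (v x) j \<noteq> mu v f (v x)" using j by (auto simp: Sm_def)
    moreover have "mu v f (v x) \<le> phi v f (v x) j" using j mu_le by auto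
    ultimately show ?thesis by linarith
  qed
  have sI: "s \<in> Iset f" and sm: "phi v f (v x) s = mu v f (v x)" using s by (auto simp: Sm_def)
  have "0 = coeff f s * x ^ s + (\<Sum>j\<in>Iset f - {s}. coeff f j * x ^ j)"
    using x(2) unfolding poly_Iset by (simp add: sum.remove[OF Iset_finite sI])
  moreover have "(\<Sum>j\<in>Iset f - {s}. coeff f j * x ^ j) \<in> vball v (mu v f (v x) + 1)"
  proof (rule vb_sum[OF dv])
    fix i assume i: "i \<in> Iset f - {s}"
    have "coeff f i * x ^ i \<in> vball v (phi v f (v x) i)" using i x(1) by (simp add: term_vb)
    then show "coeff f i * x ^ i \<in> vball v (mu v f (v x) + 1)" using hi[OF i] by (rule vb_mono[OF dv])
  qed
  ultimately have "coeff f s * x ^ s \<in> vball v (mu v f (v x) + 1)"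
    using vb_neg_iff[OF dv] by (metis add_eq_0_iff)
  then show False using term_v[OF sI x(1)] sm vb_not[OF dv] by metis
qed


lemma edge:
  assumes f0: "f \<noteq> 0" and x: "x \<noteq> 0" "poly f x = 0" and reg: "regular v p f"
  shows "Min (Sm v f (v x)) < Max (Sm v f (v x)) \<and> Sm v f (v x) = {Min (Sm v f (v x)), Max (Sm v f (v x))}
     \<and> \<not> int p dvd (int (Max (Sm v f (v x))) - int (Min (Sm v f (v x))))"
proof -
  define S where "S = Sm v f (v x)"
  define m where "m = v x"
  define a where "a = Min S"
  define b where "b = Max S"
  define \<mu> where "\<mu> = mu v f m"
  have fS: "finite S" unfolding S_def by (rule Sm_finite)
  have neS: "S \<noteq> {}" using mu_in[OF f0, of v "v x"] by (auto simp: S_def Sm_def)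
  have aS: "a \<in> S" and bS: "b \<in> S" using fS neS by (auto simp: a_def b_def)
  obtain j where j: "j \<in> S" "j \<noteq> a" using two_min[OF f0 x] aS unfolding S_def by blast
  have "a \<le> j" using fS j by (simp add: a_def)
  moreover have "j \<le> b" using fS j by (simp add: b_def)
  ultimately have ab: "a < b" using j by linarith
  have aI: "a \<in> Iset f" and bI: "b \<in> Iset f" using aS bS Sm_sub unfolding S_def by auto
  have pa: "phi v f m a = \<mu>" and pb: "phi v f m b = \<mu>" using aS bS by (auto simp: S_def Sm_def m_def \<mu>_def)
  define A where "A = v (coeff f a)"
  define B where "B = v (coeff f b)"
  have BA: "B - A = - (int b - int a) * m" using pa pb by (simp add: phi_def A_def B_def algebra_simps)
  have ge: "\<mu> \<le> phi v f m i" if "i \<in> Iset f" for i using that mu_le by (simp add: \<mu>_def)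
  have ba0: "int b - int a > 0" using ab by simp
  have line_iff: "on_line (int a, A) (int b, B) (int i, v (coeff f i)) \<longleftrightarrow> phi v f m i = \<mu>" for i
  proof -
    have eq: "(B - A) * (int i - int a) = (v (coeff f i) - A) * (int b - int a)
       + - ((int b - int a) * (v (coeff f i) - A + m * (int i - int a)))"
      by (simp add: BA algebra_simps)
    have "on_line (int a, A) (int b, B) (int i, v (coeff f i)) \<longleftrightarrow>
          (int b - int a) * (v (coeff f i) - A + m * (int i - int a)) = 0"
      unfolding on_line_def fst_conv snd_conv eq by simp
    also have "\<dots> \<longleftrightarrow> v (coeff f i) - A + m * (int i - int a) = 0" using ba0 by simp
    also have "\<dots> \<longleftrightarrow> phi v f m i = \<mu>" using pa by (simp add: phi_def A_def algebra_simps)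
    finally show ?thesis .
  qed
  have above: "on_or_above (int a, A) (int b, B) (int i, v (coeff f i))" if "i \<in> Iset f" for i
  proof -
    have "0 \<le> v (coeff f i) - A + m * (int i - int a)" using ge[OF that] pa
      by (simp add: phi_def A_def algebra_simps)
    then have "0 \<le> (int b - int a) * (v (coeff f i) - A + m * (int i - int a))" using ba0 by simp
    moreover have eq: "(B - A) * (int i - int a) = (v (coeff f i) - A) * (int b - int a)
       + - ((int b - int a) * (v (coeff f i) - A + m * (int i - int a)))"
      by (simp add: BA algebra_simps)
    ultimately show ?thesis unfolding on_or_above_def fst_conv snd_conv by linarith
  qed
  have NP: "newton_pts v f = (\<lambda>i. (int i, v (coeff f i))) ` Iset f"
    by (auto simp: newton_pts_def Iset_def)
  have lineset: "{c \<in> newton_pts v f. on_line (int a, A) (int b, B) c} = (\<lambda>i. (int i, v (coeff f i))) ` S"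
    using line_iff unfolding NP by (auto simp: S_def Sm_def m_def \<mu>_def)
  have le: "lower_edge v f (int a, A) (int b, B)"
    unfolding lower_edge_def
  proof (intro conjI ballI impI)
    show "(int a, A) \<in> newton_pts v f" using aI by (auto simp: NP A_def)
    show "(int b, B) \<in> newton_pts v f" using bI by (auto simp: NP B_def)
    show "fst (int a, A) < fst (int b, B)" using ab by simp
    fix c assume c: "c \<in> newton_pts v f"
    then obtain i where i: "i \<in> Iset f" "c = (int i, v (coeff f i))" by (auto simp: NP)
    show "on_or_above (int a, A) (int b, B) c" using above i by simp
    assume "on_line (int a, A) (int b, B) c"
    then have "i \<in> S" using i line_iff by (auto simp: S_def Sm_def m_def \<mu>_def)
    then show "fst (int a, A) \<le> fst c" "fst c \<le> fst (int b, B)"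
      using i fS by (auto simp: a_def b_def)
  qed
  have "card {c \<in> newton_pts v f. on_line (int a, A) (int b, B) c} = 2 \<and> \<not> int p dvd (int b - int a)"
    using reg le unfolding regular_def by fastforce
  then have c2: "card ((\<lambda>i. (int i, v (coeff f i))) ` S) = 2" and nd: "\<not> int p dvd (int b - int a)"
    unfolding lineset by auto
  have "card S = 2" using c2 by (simp add: card_image inj_on_def)
  moreover have "{a, b} \<subseteq> S" "card {a,b} = 2" using aS bS ab by auto
  ultimately have "S = {a, b}" using fS by (metis card_subset_eq)
  then show ?thesis using ab nd by (simp add: S_def a_def b_def m_def)
qed

end


context fixes v :: "'a::field \<Rightarrow> int" and f :: "'a poly" and p :: nat
  assumes dv: "discrete_valuation v" and f0: "f \<noteq> 0" and reg: "regular v p f"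
    and pp: "prime p" and pm: "of_nat p \<in> vball v 1"
begin

lemma key_nonzero:
  assumes y: "y \<noteq> 0" "poly f y = 0"
    and e: "\<And>i. i \<in> Iset f \<Longrightarrow> e i \<in> vball v (int i * v y + 1)"
  shows "(\<Sum>i\<in>Iset f. coeff f i * (of_nat i * y ^ i + e i)) \<noteq> 0"
proof -
  define m where "m = v y"
  define S where "S = Sm v f m"
  define a where "a = Min S"
  define b where "b = Max S"
  define \<mu> where "\<mu> = mu v f m"
  have ed: "a < b" "S = {a, b}" "\<not> int p dvd (int b - int a)"
    using edge[OF dv f0 y reg] unfolding S_def a_def b_def m_def by auto
  have "{a, b} \<subseteq> Iset f" using ed(2) Sm_sub[of v f m] unfolding S_def by simp
  then have aI: "a \<in> Iset f" and bI: "b \<in> Iset f" by auto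
  have pb: "phi v f m b = \<mu>" using ed by (auto simp: S_def Sm_def \<mu>_def)
  have ge: "\<mu> \<le> phi v f m i" if "i \<in> Iset f" for i using that mu_le by (simp add: \<mu>_def)
  let ?c = "coeff f"
  define z where "z = (of_nat b - of_nat a) * (?c b * y ^ b)"
  define T1 where "T1 = (\<Sum>i\<in>Iset f - {b}. (of_nat i - of_nat a) * (?c i * y ^ i))"
  define T2 where "T2 = (\<Sum>i\<in>Iset f. ?c i * e i)"
  have "(\<Sum>i\<in>Iset f. ?c i * (of_nat i * y ^ i + e i))
      = (\<Sum>i\<in>Iset f. of_nat i * (?c i * y ^ i)) + T2"
    unfolding T2_def by (simp add: sum.distrib algebra_simps)
  also have "(\<Sum>i\<in>Iset f. of_nat i * (?c i * y ^ i))
      = (\<Sum>i\<in>Iset f. (of_nat i - of_nat a) * (?c i * y ^ i)) + of_nat a * poly f y"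
    by (simp add: poly_Iset sum_distrib_left sum.distrib[symmetric] algebra_simps)
  also have "(\<Sum>i\<in>Iset f. (of_nat i - of_nat a) * (?c i * y ^ i)) = z + T1"
    unfolding z_def T1_def by (rule sum.remove[OF Iset_finite bI])
  finally have tot: "(\<Sum>i\<in>Iset f. ?c i * (of_nat i * y ^ i + e i)) = z + (T1 + T2)"
    using y(2) by simp
  have T1b: "T1 \<in> vball v (\<mu> + 1)" unfolding T1_def
  proof (rule vb_sum[OF dv])
    fix i assume i: "i \<in> Iset f - {b}"
    show "(of_nat i - of_nat a) * (?c i * y ^ i) \<in> vball v (\<mu> + 1)"
    proof (cases "i = a")
      case True then show ?thesis by (simp add: vb_iff)
    next
      case False
      then have "i \<notin> S" using i ed by auto
      then have "phi v f m i \<ge> \<mu> + 1" using i ge[of i] by (auto simp: S_def Sm_def \<mu>_def)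
      moreover have "(of_nat i - of_nat a :: 'a) \<in> vball v 0"
        by (intro vb_diff[OF dv] vb_of_nat[OF dv])
      moreover have "?c i * y ^ i \<in> vball v (phi v f m i)" using i y(1) term_vb[OF dv] m_def by auto
      ultimately show ?thesis using vb_mult'[OF dv, of "of_nat i - of_nat a" 0 "?c i * y ^ i" "phi v f m i" "\<mu> + 1"]
        by simp
    qed
  qed
  have T2b: "T2 \<in> vball v (\<mu> + 1)" unfolding T2_def
  proof (rule vb_sum[OF dv])
    fix i assume i: "i \<in> Iset f"
    have "?c i \<in> vball v (v (?c i))" using i by (intro vb_self[OF dv]) (simp add: Iset_def)
    moreover have "v (?c i) + (int i * m + 1) \<ge> \<mu> + 1" using ge[OF i] by (simp add: phi_def)
    ultimately show "?c i * e i \<in> vball v (\<mu> + 1)" using e[OF i] m_def vb_mult'[OF dv] by blast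
  qed
  have u: "(of_int (int b - int a) :: 'a) \<noteq> 0 \<and> v (of_int (int b - int a)) = 0"
    by (rule unit_int[OF dv pp pm ed(3)])
  have zz: "z \<noteq> 0 \<and> v z = \<mu>"
  proof -
    have "(of_nat b - of_nat a :: 'a) = of_int (int b - int a)" by simp
    moreover have "?c b * y ^ b \<noteq> 0 \<and> v (?c b * y ^ b) = \<mu>" using term_v[OF dv bI y(1)] pb m_def by simp
    ultimately show ?thesis using u by (simp add: z_def vmult[OF dv])
  qed
  show ?thesis
  proof
    assume "(\<Sum>i\<in>Iset f. ?c i * (of_nat i * y ^ i + e i)) = 0"
    then have "z + (T1 + T2) = 0" using tot by simp
    then have "z = - (T1 + T2)" using eq_neg_iff_add_eq_0[of z "T1 + T2"] by blast
    moreover have "- (T1 + T2) \<in> vball v (\<mu> + 1)" using T1b T2b vb_add[OF dv] vb_neg[OF dv] by blast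
    ultimately show False using zz vb_not[OF dv] by metis
  qed
qed

end


lemma poly_bound: "degree p \<le> N \<Longrightarrow> poly p x = (\<Sum>i\<le>N. coeff p i * x ^ i)" for x :: "'a::field"
  unfolding poly_altdef
  by (rule sum.mono_neutral_left) (auto simp: coeff_eq_0)

lemma xpderiv: "x * poly (pderiv f) x = (\<Sum>i\<in>Iset f. coeff f i * (of_nat i * x ^ i))" for x :: "'a::field"
proof -
  define N where "N = degree f"
  define g where "g i = coeff f i * (of_nat i * x ^ i)" for i
  have "poly (pderiv f) x = (\<Sum>n\<le>N. coeff (pderiv f) n * x ^ n)"
    by (rule poly_bound) (auto simp: N_def coeff_pderiv coeff_eq_0 intro!: degree_le)
  then have "x * poly (pderiv f) x = (\<Sum>n\<le>N. g (Suc n))"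
    by (simp add: sum_distrib_left coeff_pderiv g_def algebra_simps)
  also have "\<dots> = (\<Sum>i\<le>Suc N. g i)" by (simp only: sum.atMost_Suc_shift) (simp add: g_def)
  also have "\<dots> = (\<Sum>i\<le>N. g i)" by (simp add: g_def coeff_eq_0 N_def)
  also have "\<dots> = (\<Sum>i\<in>Iset f. g i)"
    by (rule sum.mono_neutral_right) (auto simp: Iset_def le_degree N_def g_def)
  finally show ?thesis by (simp add: g_def)
qed

lemma order_ge2: "f \<noteq> 0 \<Longrightarrow> 2 \<le> order x f \<Longrightarrow> poly (pderiv f) x = 0"
proof -
  assume "f \<noteq> 0" "2 \<le> order x f"
  then have "[:-x, 1:] ^ 2 dvd f" by (simp add: order_divides)
  then obtain g where fg: "f = [:-x, 1:] ^ Suc 1 * g" by (auto elim: dvdE simp: numeral_2_eq_2)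
  define q where "q = [:-x, 1:]"
  have q0: "poly q x = 0" by (simp add: q_def)
  have "pderiv f = q ^ Suc 1 * pderiv g + g * (smult (of_nat (Suc 1)) (q ^ 1) * pderiv q)"
    unfolding fg q_def[symmetric] by (simp only: pderiv_mult pderiv_power_Suc)
  then show ?thesis by (simp add: q0)
qed

context fixes v :: "'a::field \<Rightarrow> int" and f :: "'a poly" and p :: nat
  assumes dv: "discrete_valuation v" and f0: "f \<noteq> 0" and reg: "regular v p f"
    and pp: "prime p" and pm: "of_nat p \<in> vball v 1"
begin

lemma simple: assumes "x \<noteq> 0" "poly f x = 0" shows "order x f = 1"
proof (rule ccontr)
  assume n1: "order x f \<noteq> 1"
  have "order x f \<noteq> 0" using assms f0 order_root by blast
  then have "2 \<le> order x f" using n1 by linarith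
  then have "poly (pderiv f) x = 0" using order_ge2 f0 by blast
  then have "(\<Sum>i\<in>Iset f. coeff f i * (of_nat i * x ^ i + 0)) = 0" using xpderiv[of x f] by simp
  moreover have "(\<Sum>i\<in>Iset f. coeff f i * (of_nat i * x ^ i + 0)) \<noteq> 0"
    by (rule key_nonzero[OF dv f0 reg pp pm assms]) (simp add: vb_iff)
  ultimately show False by simp
qed

lemma inj_root:
  assumes x: "x \<noteq> 0" "poly f x = 0" and y: "y \<noteq> 0" "poly f y = 0" and vxy: "v x = v y"
    and xy: "x - y \<in> vball v (v y + 1)"
  shows "x = y"
proof (rule ccontr)
  assume ne: "x \<noteq> y"
  define m where "m = v y"
  define h where "h k = (\<Sum>j<k. y ^ (k - Suc j) * x ^ j)" for k
  have hd: "x ^ k - y ^ k = (x - y) * h k" for k by (simp add: h_def power_diff_sumr2)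
  have xm: "x \<in> vball v m" using vb_self[OF dv x(1)] vxy m_def by simp
  have ym: "y \<in> vball v m" using vb_self[OF dv y(1)] m_def by simp
  have hv: "h k \<in> vball v ((int k - 1) * m)" for k
  proof (cases k)
    case 0 then show ?thesis by (simp add: h_def vb_iff)
  next
    case (Suc k')
    show ?thesis unfolding h_def
    proof (rule vb_sum[OF dv])
      fix j assume j: "j \<in> {..<k}"
      have e: "int (k - Suc j) * m + int j * m = (int k - 1) * m" using j by (simp add: of_nat_diff algebra_simps)
      show "y ^ (k - Suc j) * x ^ j \<in> vball v ((int k - 1) * m)"
        using vb_mult[OF dv vb_pow[OF dv ym] vb_pow[OF dv xm], of "k - Suc j" j] e by simp
    qed
  qed
  define e where "e i = y * h i - of_nat i * y ^ i" for i
  have eeq: "e i = (\<Sum>k<i. y ^ (i - k) * (x ^ k - y ^ k))" for i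
  proof -
    have "y * h i = (\<Sum>k<i. y ^ (i - k) * x ^ k)"
      unfolding h_def sum_distrib_left
    proof (rule sum.cong)
      fix k assume "k \<in> {..<i}"
      then have "i - k = Suc (i - Suc k)" by auto
      then show "y * (y ^ (i - Suc k) * x ^ k) = y ^ (i - k) * x ^ k" by simp
    qed simp
    moreover have "of_nat i * y ^ i = (\<Sum>k<i. y ^ (i - k) * y ^ k)"
    proof -
      have "(\<Sum>k<i. y ^ (i - k) * y ^ k) = (\<Sum>k<i. y ^ i)"
        by (rule sum.cong) (auto simp: power_add[symmetric])
      then show ?thesis by simp
    qed
    ultimately show ?thesis by (simp add: e_def sum_subtractf right_diff_distrib)
  qed
  have ev: "e i \<in> vball v (int i * v y + 1)" if "i \<in> Iset f" for i
    unfolding eeq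
  proof (rule vb_sum[OF dv])
    fix k assume k: "k \<in> {..<i}"
    have a1: "y ^ (i - k) \<in> vball v (int (i - k) * m)" by (rule vb_pow[OF dv ym])
    have a2: "(x - y) * h k \<in> vball v ((m + 1) + (int k - 1) * m)"
      by (rule vb_mult[OF dv]) (use xy m_def hv in auto)
    have eq: "int (i - k) * m + ((m + 1) + (int k - 1) * m) = int i * v y + 1"
      using k by (simp add: of_nat_diff algebra_simps m_def)
    show "y ^ (i - k) * (x ^ k - y ^ k) \<in> vball v (int i * v y + 1)"
      using vb_mult[OF dv a1 a2] eq hd[of k] by simp
  qed
  have s1: "(\<Sum>i\<in>Iset f. coeff f i * (of_nat i * y ^ i + e i)) = y * (\<Sum>i\<in>Iset f. coeff f i * h i)"
    by (simp add: e_def sum_distrib_left algebra_simps)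
  have "(x - y) * (\<Sum>i\<in>Iset f. coeff f i * h i) = (\<Sum>i\<in>Iset f. coeff f i * (x ^ i - y ^ i))"
    by (simp add: hd sum_distrib_left algebra_simps)
  also have "\<dots> = poly f x - poly f y" by (simp add: poly_Iset sum_subtractf right_diff_distrib)
  finally have "(x - y) * (\<Sum>i\<in>Iset f. coeff f i * h i) = 0" using x y by simp
  then have "(\<Sum>i\<in>Iset f. coeff f i * h i) = 0" using ne by simp
  then have "(\<Sum>i\<in>Iset f. coeff f i * (of_nat i * y ^ i + e i)) = 0" using s1 by simp
  moreover have "(\<Sum>i\<in>Iset f. coeff f i * (of_nat i * y ^ i + e i)) \<noteq> 0"
    by (rule key_nonzero[OF dv f0 reg pp pm y]) (rule ev)
  ultimately show False by simp
qed

end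


context fixes v :: "'a::field \<Rightarrow> int" and f :: "'a poly" and p :: nat
  assumes dv: "discrete_valuation v" and f0: "f \<noteq> 0" and reg: "regular v p f"
    and pp: "prime p" and pm: "of_nat p \<in> vball v 1"
begin

lemma count_m:
  assumes fin: "finite (residue_field v)"
  shows "card {x. x \<noteq> 0 \<and> poly f x = 0 \<and> v x = m} \<le> card (residue_field v) - 1"
proof (cases "{x. x \<noteq> 0 \<and> poly f x = 0 \<and> v x = m} = {}")
  case True then show ?thesis by (simp only: card.empty)
next
  case False
  define Rm where "Rm = {x. x \<noteq> 0 \<and> poly f x = 0 \<and> v x = m}"
  obtain z where z: "z \<in> Rm" using False Rm_def by auto
  have z0: "z \<noteq> 0" "v z = m" using z by (auto simp: Rm_def)
  define r where "r u = residue_rel v `` {u}" for u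
  have rin: "u \<in> valring v \<Longrightarrow> r u \<in> residue_field v" for u
    unfolding r_def residue_field_def by (rule quotientI)
  have self: "u \<in> valring v \<Longrightarrow> u \<in> r u" for u
    by (simp add: r_def residue_rel_def maxideal_def vb_iff)
  have fR: "finite Rm"
    by (rule finite_subset[OF _ poly_roots_finite[OF f0]]) (auto simp: Rm_def)
  have q0: "x / z \<noteq> 0 \<and> v (x / z) = 0" if "x \<in> Rm" for x
    using that z0 by (auto simp: Rm_def vdiv[OF dv])
  have val: "x / z \<in> valring v" if "x \<in> Rm" for x
    using q0[OF that] by (simp add: valring_def vb_iff)
  have "inj_on (\<lambda>x. r (x / z)) Rm"
  proof (rule inj_onI)
    fix x y assume x: "x \<in> Rm" and y: "y \<in> Rm" and e: "r (x / z) = r (y / z)"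
    have "x / z \<in> r (y / z)" using e self[OF val[OF x]] by simp
    then have "y / z - x / z \<in> vball v 1" by (simp add: r_def residue_rel_def maxideal_def)
    then have "(y / z - x / z) * z \<in> vball v (1 + v z)" using vb_mult[OF dv _ vb_self[OF dv z0(1)]] by blast
    then have "y - x \<in> vball v (1 + m)" using z0 by (simp add: algebra_simps)
    then have "x - y \<in> vball v (v y + 1)" using vb_neg[OF dv, of "y - x"] y by (simp add: Rm_def add.commute)
    then show "x = y" using inj_root[OF dv f0 reg pp pm] x y by (auto simp: Rm_def)
  qed
  moreover have "(\<lambda>x. r (x / z)) ` Rm \<subseteq> residue_field v - {r 0}"
  proof safe
    fix x assume x: "x \<in> Rm"
    show "r (x / z) \<in> residue_field v" using rin val x by blast
    assume "r (x / z) = r 0"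
    then have "x / z \<in> r 0" using self[OF val[OF x]] by simp
    then have "0 - x / z \<in> vball v 1" by (simp add: r_def residue_rel_def maxideal_def)
    then show False using q0[OF x] by (simp add: vb_iff vneg[OF dv])
  qed
  ultimately have "card Rm \<le> card (residue_field v - {r 0})"
    using fin by (intro card_inj_on_le) auto
  also have "\<dots> = card (residue_field v) - 1"
    using rin[of 0] by (simp add: valring_def vb_iff)
  finally show ?thesis by (simp add: Rm_def)
qed

lemma count_vals:
  "card (v ` {x. x \<noteq> 0 \<and> poly f x = 0}) \<le> card (Iset f) - 1"
proof -
  define R where "R = {x. x \<noteq> 0 \<and> poly f x = 0}"
  define F where "F m = Min (Sm v f m)" for m
  have ed: "F m < Max (Sm v f m) \<and> Sm v f m = {F m, Max (Sm v f m)} \<and> Sm v f m \<subseteq> Iset f"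
    if "m \<in> v ` R" for m
  proof -
    from that obtain x where "x \<in> R" "m = v x" by auto
    then show ?thesis using edge[OF dv f0 _ _ reg, of x] Sm_sub unfolding F_def R_def by auto
  qed
  have "inj_on F (v ` R)"
  proof -
    have *: "F m1 \<noteq> F m2" if "m1 \<in> v ` R" "m2 \<in> v ` R" "m1 < m2" for m1 m2
    proof -
      have "F m1 \<in> Sm v f m1" "Max (Sm v f m2) \<in> Sm v f m2" using ed[OF that(1)] ed[OF that(2)] by blast+
      then have "Max (Sm v f m2) \<le> F m1" using Sm_mono that(3) by blast
      then show ?thesis using ed[OF that(2)] by linarith
    qed
    show ?thesis unfolding inj_on_def by (metis * linorder_neqE)
  qed
  moreover have "F ` (v ` R) \<subseteq> Iset f - {Max (Iset f)}"
  proof safe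
    fix x assume x: "x \<in> R"
    have "F (v x) \<in> Iset f" "Max (Sm v f (v x)) \<in> Iset f" using ed[of "v x"] x by blast+
    then show "F (v x) \<in> Iset f" by blast
    assume "F (v x) = Max (Iset f)"
    moreover have "Max (Sm v f (v x)) \<le> Max (Iset f)" using \<open>Max (Sm v f (v x)) \<in> Iset f\<close> Iset_finite[of f] by (simp add: Max_ge)
    ultimately show False using ed[of "v x"] x by force
  qed
  ultimately have "card (v ` R) \<le> card (Iset f - {Max (Iset f)})"
    by (intro card_inj_on_le) (auto simp: Iset_finite)
  also have "\<dots> = card (Iset f) - 1" using Iset_finite[of f] Iset_ne[OF f0] by (simp add: card_Diff_singleton)
  finally show ?thesis by (simp add: R_def)
qed

end

theorem corollary4p7:
  fixes v :: "'a::field \<Rightarrow> int" and q p t :: nat and f :: "'a poly"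
  assumes "discrete_valuation v" and "v_complete v"
    and "finite (residue_field v)" and "card (residue_field v) = q"
    and "prime p" and "of_nat p \<in> maxideal v"
    and "regular v p f"
    and "card {i. coeff f i \<noteq> 0} = t + 1"
  shows "card {x. x \<noteq> 0 \<and> poly f x = 0} \<le> t * (q - 1) \<and>
         (\<forall>x. x \<noteq> 0 \<and> poly f x = 0 \<longrightarrow> order x f = 1)"
proof -
  note dv = assms(1) and reg = assms(7) and pp = assms(5)
  have pm: "of_nat p \<in> vball v 1" using assms(6) by (simp add: maxideal_def)
  have cI: "card (Iset f) = t + 1" using assms(8) by (simp add: Iset_def)
  have f0: "f \<noteq> 0"
  proof
    assume "f = 0" then have "Iset f = {}" by (simp add: Iset_def)
    then show False using cI by simp
  qed
  define R where "R = {x. x \<noteq> 0 \<and> poly f x = 0}"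
  define Rm where "Rm m = {x. x \<noteq> 0 \<and> poly f x = 0 \<and> v x = m}" for m
  have "R = (\<Union>m\<in>v ` R. Rm m)" by (auto simp: R_def Rm_def)
  moreover have fR: "finite R" by (rule finite_subset[OF _ poly_roots_finite[OF f0]]) (auto simp: R_def)
  ultimately have "card R \<le> (\<Sum>m\<in>v ` R. card (Rm m))" by (metis card_UN_le finite_imageI)
  also have "\<dots> \<le> (\<Sum>m\<in>v ` R. q - 1)"
    using count_m[OF dv f0 reg pp pm assms(3)] assms(4) by (intro sum_mono) (simp add: Rm_def)
  also have "\<dots> = card (v ` R) * (q - 1)" by simp
  also have "\<dots> \<le> t * (q - 1)"
    using count_vals[OF dv f0 reg pp pm] cI by (intro mult_right_mono) (auto simp: R_def)
  finally have "card R \<le> t * (q - 1)" .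
  moreover have "\<forall>x. x \<noteq> 0 \<and> poly f x = 0 \<longrightarrow> order x f = 1"
    using simple[OF dv f0 reg pp pm] by blast
  ultimately show ?thesis by (simp add: R_def)
qed


end
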